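(* For all integers $n\ge 0$ and $\alpha\ge 0$, \[\overline{p}\big(4^{\alpha}(40n+35)\big)\equiv 0 \pmod{40}.\] In particular (case $\alpha=0$), $\overline{p}(40n+35)\equiv 0 \pmod{40}$ for all $n\ge 0$.
   Context: An overpartition of a nonnegative integer $n$ is a partition of $n$ in which the first occurrence of each distinct part may (or may not) be overlined; $\overline{p}(n)$ denotes the number of overpartitions of $n$ (with $\overline{p}(0)=1$). Equivalently, $\sum_{n\ge0}\overline{p}(n)q^n=\prod_{k\ge1}\frac{1+q^k}{1-q^k}$. *)

theory Defs
  imports Main "HOL-Library.Multiset"
begin

text \<open>An overpartition of n is a partition M of n together with the set S of
distinct parts whose first occurrence is overlined (S a subset of the parts).\<close>

definition overpartitions :: "nat \<Rightarrow> (nat multiset \<times> nat set) set" where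
  "overpartitions n = {(M, S). (\<forall>x\<in>#M. 0 < x) \<and> sum_mset M = n \<and> S \<subseteq> set_mset M}"

definition overpartition_count :: "nat \<Rightarrow> nat" where
  "overpartition_count n = card (overpartitions n)"

end

theory Submission
  imports Defs "HOL-Computational_Algebra.Formal_Power_Series" "HOL-Library.FuncSet"
begin


abbreviation XX :: "int fps" where "XX \<equiv> fps_X"

definition mc :: "int \<Rightarrow> int fps \<Rightarrow> int fps \<Rightarrow> bool" where
  "mc m f g \<longleftrightarrow> (\<forall>n. m dvd (fps_nth f n - fps_nth g n))"

definition bc :: "nat \<Rightarrow> int \<Rightarrow> int fps \<Rightarrow> int fps \<Rightarrow> bool" where
  "bc T m f g \<longleftrightarrow> (\<forall>n<T. m dvd (fps_nth f n - fps_nth g n))"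

lemma bc_mult:
  assumes "bc T m f f'" "bc T m g g'"
  shows "bc T m (f*g) (f'*g')"
  unfolding bc_def
proof (intro allI impI)
  fix n assume n: "n < T"
  have "fps_nth (f*g) n - fps_nth (f'*g') n = (\<Sum>i=0..n. (fps_nth f i - fps_nth f' i) * fps_nth g (n-i) + fps_nth f' i * (fps_nth g (n-i) - fps_nth g' (n-i)))"
    by (simp add: fps_mult_nth sum_subtractf[symmetric] algebra_simps)
  also have "m dvd \<dots>"
  proof (rule dvd_sum)
    fix i assume i: "i \<in> {0..n}"
    have "m dvd (fps_nth f i - fps_nth f' i)" using assms(1) n i unfolding bc_def by auto
    moreover have "m dvd (fps_nth g (n-i) - fps_nth g' (n-i))" using assms(2) n i unfolding bc_def by auto
    ultimately show "m dvd (fps_nth f i - fps_nth f' i) * fps_nth g (n-i) + fps_nth f' i * (fps_nth g (n-i) - fps_nth g' (n-i))"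
      by (simp add: dvd_add)
  qed
  finally show "m dvd fps_nth (f*g) n - fps_nth (f'*g') n" .
qed

lemma bc_refl: "bc T m f f" by (simp add: bc_def)
lemma bc_sym: "bc T m f g \<Longrightarrow> bc T m g f"
  unfolding bc_def by (metis dvd_minus_iff minus_diff_eq)
lemma bc_trans: "bc T m f g \<Longrightarrow> bc T m g h \<Longrightarrow> bc T m f h"
  unfolding bc_def
proof (intro allI impI)
  fix n assume a: "\<forall>n<T. m dvd fps_nth f n - fps_nth g n" "\<forall>n<T. m dvd fps_nth g n - fps_nth h n" "n < T"
  have "m dvd (fps_nth f n - fps_nth g n) + (fps_nth g n - fps_nth h n)" using a by (intro dvd_add) auto
  then show "m dvd fps_nth f n - fps_nth h n" by simp
qed
lemma bc_add: "bc T m f f' \<Longrightarrow> bc T m g g' \<Longrightarrow> bc T m (f+g) (f'+g')"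
  unfolding bc_def
proof (intro allI impI)
  fix n assume a: "\<forall>n<T. m dvd fps_nth f n - fps_nth f' n" "\<forall>n<T. m dvd fps_nth g n - fps_nth g' n" "n < T"
  have "m dvd (fps_nth f n - fps_nth f' n) + (fps_nth g n - fps_nth g' n)" using a by (intro dvd_add) auto
  then show "m dvd fps_nth (f+g) n - fps_nth (f'+g') n" by (simp add: algebra_simps)
qed

lemma mc_bc: "mc m f g \<longleftrightarrow> (\<forall>T. bc T m f g)"
  unfolding mc_def bc_def by auto

lemma mc_mult: "mc m f f' \<Longrightarrow> mc m g g' \<Longrightarrow> mc m (f*g) (f'*g')"
  using bc_mult mc_bc by blast
lemma mc_refl: "mc m f f" by (simp add: mc_def)
lemma mc_sym: "mc m f g \<Longrightarrow> mc m g f" using bc_sym mc_bc by blast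
lemma mc_trans: "mc m f g \<Longrightarrow> mc m g h \<Longrightarrow> mc m f h" using bc_trans mc_bc by blast
lemma mc_add: "mc m f f' \<Longrightarrow> mc m g g' \<Longrightarrow> mc m (f+g) (f'+g')" using bc_add mc_bc by blast

lemma bc0: "bc T 0 f g \<longleftrightarrow> (\<forall>n<T. fps_nth f n = fps_nth g n)" by (simp add: bc_def)




definition sg :: "int \<Rightarrow> int" where "sg k = (if even k then 1 else -1)"

lemma sg_add: "sg (a+b) = sg a * sg b" by (auto simp: sg_def)
lemma sg_minus: "sg (-a) = sg a" by (auto simp: sg_def)
lemma sg_pow5: "sg a ^ 5 = sg a" by (auto simp: sg_def)

definition th :: "nat \<Rightarrow> int" where
  "th n = (\<Sum>j\<in>{j\<in>{-int n..int n}. j*j = int n}. sg j)"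
definition Th :: "int fps" where "Th = Abs_fps th"
definition thN :: "nat \<Rightarrow> int fps" where
  "thN N = (\<Sum>j\<in>{-int N..int N}. fps_const (sg j) * XX ^ nat (j*j))"

lemma sum_monomials_nth:
  assumes "finite A"
  shows "fps_nth (\<Sum>j\<in>A. fps_const (c j) * XX ^ (e j)) n = (\<Sum>j\<in>{j\<in>A. e j = n}. c j)"
proof -
  have "fps_nth (\<Sum>j\<in>A. fps_const (c j) * XX ^ (e j)) n = (\<Sum>j\<in>A. if e j = n then c j else 0)"
    by (auto simp: fps_sum_nth intro!: sum.cong)
  also have "\<dots> = (\<Sum>j\<in>{j\<in>A. e j = n}. c j)"
    using assms by (simp add: sum.inter_filter)
  finally show ?thesis .
qed

lemma abs_le_sq: "\<bar>j::int\<bar> \<le> j*j"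
proof (cases "j = 0")
  case False
  then have "1 \<le> \<bar>j\<bar>" by simp
  then have "\<bar>j\<bar> * 1 \<le> \<bar>j\<bar> * \<bar>j\<bar>" by (intro mult_left_mono) auto
  then show ?thesis by (simp add: abs_mult_self_eq)
qed simp


lemma thN_th:
  assumes "n \<le> N"
  shows "fps_nth (thN N) n = th n"
proof -
  have "fps_nth (thN N) n = (\<Sum>j\<in>{j\<in>{-int N..int N}. nat (j*j) = n}. sg j)"
    unfolding thN_def by (rule sum_monomials_nth) simp
  also have "{j\<in>{-int N..int N}. nat (j*j) = n} = {j\<in>{-int n..int n}. j*j = int n}"
  proof (intro set_eqI iffI)
    fix j assume j: "j \<in> {j\<in>{-int N..int N}. nat (j*j) = n}"
    then have "j*j = int n" by auto
    moreover have "\<bar>j\<bar> \<le> int n" using abs_le_sq[of j] \<open>j*j = int n\<close> by simp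
    ultimately show "j \<in> {j\<in>{-int n..int n}. j*j = int n}" by auto
  next
    fix j assume j: "j \<in> {j\<in>{-int n..int n}. j*j = int n}"
    then show "j \<in> {j\<in>{-int N..int N}. nat (j*j) = n}" using assms by auto
  qed
  finally show ?thesis unfolding th_def .
qed

lemma bc_Th: "bc (Suc N) 0 Th (thN N)"
  unfolding bc0 Th_def by (auto simp: thN_th)

lemma bc_power: "bc T m f g \<Longrightarrow> bc T m (f^k) (g^k)"
  by (induction k) (auto simp: bc_refl intro: bc_mult)

lemma mc_power: "mc m f g \<Longrightarrow> mc m (f^k) (g^k)"
  using bc_power mc_bc by blast

lemma mc_of_eq: "f - g = fps_const m * h \<Longrightarrow> mc m f g"
  unfolding mc_def
proof
  fix n assume "f - g = fps_const m * h"
  then have "fps_nth (f - g) n = m * fps_nth h n" by simp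
  then show "m dvd fps_nth f n - fps_nth g n" by simp
qed

lemma mc5_binom: "mc 5 ((x+y)^5) (x^5 + (y::int fps)^5)"
proof (rule mc_of_eq)
  show "(x+y)^5 - (x^5+y^5) = fps_const 5 * (x*y*(x^3+2*x^2*y+2*x*y^2+y^3))"
    by (simp add: fps_numeral_fps_const[symmetric] algebra_simps power2_eq_square power3_eq_cube
          numeral_eq_Suc)
qed

lemma frob:
  assumes "finite A"
  shows "mc 5 ((\<Sum>a\<in>A. f a)^5) (\<Sum>a\<in>A. (f a)^5)"
  using assms
proof (induction A rule: finite_induct)
  case empty
  then show ?case by (simp add: mc_refl)
next
  case (insert a A)
  have "mc 5 ((f a + (\<Sum>a\<in>A. f a))^5) ((f a)^5 + (\<Sum>a\<in>A. f a)^5)" by (rule mc5_binom)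
  moreover have "mc 5 ((f a)^5 + (\<Sum>a\<in>A. f a)^5) ((f a)^5 + (\<Sum>a\<in>A. (f a)^5))"
    using insert by (intro mc_add mc_refl)
  ultimately show ?case using insert by (simp add: mc_trans[of 5 _ "(f a)^5 + (\<Sum>a\<in>A. f a)^5"])
qed

definition Th5 :: "int fps" where
  "Th5 = Abs_fps (\<lambda>n. if 5 dvd n then th (n div 5) else 0)"

lemma Th_pow5: "mc 5 (Th^5) Th5"
  unfolding mc_def
proof
  fix n
  have "bc (Suc n) 0 (Th^5) (thN n ^ 5)" by (intro bc_power bc_Th)
  then have e1: "fps_nth (Th^5) n = fps_nth (thN n ^ 5) n" by (simp add: bc0)
  have "mc 5 (thN n ^ 5) (\<Sum>j\<in>{-int n..int n}. (fps_const (sg j) * XX ^ nat (j*j))^5)"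
    unfolding thN_def by (rule frob) simp
  then have d: "5 dvd fps_nth (thN n ^ 5) n - fps_nth (\<Sum>j\<in>{-int n..int n}. (fps_const (sg j) * XX ^ nat (j*j))^5) n"
    by (simp add: mc_def)
  have "(\<Sum>j\<in>{-int n..int n}. (fps_const (sg j) * XX ^ nat (j*j))^5)
      = (\<Sum>j\<in>{-int n..int n}. fps_const (sg j) * XX ^ (5 * nat (j*j)))"
    by (intro sum.cong refl) (simp add: power_mult_distrib sg_pow5 power_mult[symmetric] mult.commute)
  also have "fps_nth \<dots> n = (\<Sum>j\<in>{j\<in>{-int n..int n}. 5 * nat (j*j) = n}. sg j)"
    by (rule sum_monomials_nth) simp
  also have "\<dots> = fps_nth Th5 n"
  proof (cases "5 dvd n")
    case True
    then obtain k where k: "n = 5*k" by auto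
    have "(\<Sum>j\<in>{j\<in>{-int n..int n}. 5 * nat (j*j) = n}. sg j) = (\<Sum>j\<in>{j\<in>{-int n..int n}. nat (j*j) = k}. sg j)"
      using k by simp
    also have "\<dots> = fps_nth (thN n) k"
      unfolding thN_def by (rule sum_monomials_nth[symmetric]) simp
    also have "\<dots> = th k" using k by (intro thN_th) simp
    finally show ?thesis using k by (simp add: Th5_def)
  next
    case False
    then have E: "{j\<in>{-int n..int n}. 5 * nat (j*j) = n} = {}" by auto
    show ?thesis using False by (simp only: E sum.empty) (simp add: Th5_def)
  qed
  finally show "5 dvd fps_nth (Th^5) n - fps_nth Th5 n" using d e1 by simp
qed




definition geo :: "nat \<Rightarrow> int fps" where "geo k = Abs_fps (\<lambda>n. if k dvd n then 1 else 0)"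

lemma geo_mul: "k > 0 \<Longrightarrow> geo k * (1 - XX^k) = 1"
proof (rule fps_ext)
  fix n assume k: "k > 0"
  have "fps_nth (geo k * (1 - XX^k)) n = fps_nth (geo k) n - fps_nth (geo k * XX^k) n"
    by (simp add: algebra_simps)
  also have "\<dots> = fps_nth 1 n"
  proof (cases "n < k")
    case True
    then have "k dvd n \<longleftrightarrow> n = 0" using k by (auto dest: dvd_imp_le)
    then show ?thesis using True by (simp add: geo_def fps_X_power_mult_right_nth)
  next
    case False
    then have "k dvd n \<longleftrightarrow> k dvd (n - k)" by (simp add: dvd_minus_self)
    then show ?thesis using False k by (simp add: geo_def fps_X_power_mult_right_nth)
  qed
  finally show "fps_nth (geo k * (1 - XX^k)) n = fps_nth 1 n" .
qed

definition IP :: "int \<Rightarrow> int fps" where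
  "IP m = (if m < 0 then 0 else (\<Prod>k\<in>{1..nat m}. geo k))"

lemma IP_F1:
  assumes "m \<ge> 0"
  shows "IP (m - 1) = (1 - XX ^ nat m) * IP m"
proof (cases "m = 0")
  case True then show ?thesis by (simp add: IP_def)
next
  case False
  then have m1: "m \<ge> 1" using assms by simp
  have "{1..nat m} = insert (nat m) {1..nat (m-1)}" using m1 by (auto simp: nat_diff_distrib)
  moreover have "nat m \<notin> {1..nat (m-1)}" using m1 by auto
  ultimately have "IP m = geo (nat m) * IP (m - 1)" using m1 by (simp add: IP_def)
  then have "(1 - XX ^ nat m) * IP m = (geo (nat m) * (1 - XX ^ nat m)) * IP (m - 1)"
    by (simp add: algebra_simps)
  also have "geo (nat m) * (1 - XX ^ nat m) = 1" using m1 by (intro geo_mul) simp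
  finally show ?thesis by simp
qed

definition trm :: "int \<Rightarrow> int \<Rightarrow> int fps" where
  "trm N j = fps_const (sg j) * XX ^ nat (j*j) * IP (N - j) * IP (N + j)"
definition DD :: "int \<Rightarrow> int \<Rightarrow> int fps" where
  "DD N j = fps_const (sg j) * XX ^ nat (j*j + N + j) * IP (N - 1 - j) * IP (N + j)"

lemma key_j:
  assumes "-N \<le> j" "j \<le> N"
  shows "trm N j * (1 - XX ^ nat (2*N)) = trm (N - 1) j + DD N j - DD N (j - 1)"
proof -
  define a where "a = XX ^ nat (N - j)"
  define b where "b = XX ^ nat (N + j)"
  define x where "x = XX ^ nat (j*j)"
  define s where "s = fps_const (sg j)"
  define P where "P = IP (N - j) * IP (N + j)"
  have ab: "XX ^ nat (2*N) = a * b"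
  proof -
    have "nat (2*N) = nat (N - j) + nat (N + j)" using assms by linarith
    then show ?thesis by (simp add: a_def b_def power_add)
  qed
  have e1: "XX ^ nat (j*j + N + j) = x * b"
  proof -
    have h1: "0 \<le> j*j" by simp
    have h2: "0 \<le> N + j" using assms by simp
    have "nat (j*j + (N + j)) = nat (j*j) + nat (N + j)" using h1 h2 by (rule nat_add_distrib)
    then have "nat (j*j + N + j) = nat (j*j) + nat (N + j)" by (simp add: add.assoc)
    then show ?thesis by (simp add: x_def b_def power_add)
  qed
  have e2: "XX ^ nat ((j-1)*(j-1) + N + (j-1)) = x * a"
  proof -
    have "(j-1)*(j-1) + N + (j-1) = j*j + (N - j)" by (simp add: algebra_simps)
    moreover have "nat (j*j + (N - j)) = nat (j*j) + nat (N - j)" using assms by (intro nat_add_distrib) auto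
    ultimately have "nat ((j-1)*(j-1) + N + (j-1)) = nat (j*j) + nat (N - j)" by simp
    then show ?thesis by (simp add: x_def a_def power_add)
  qed
  have sgm: "fps_const (sg (j - 1)) = - s" by (simp add: s_def sg_def)
  have i1: "IP (N - 1 - j) = (1 - a) * IP (N - j)"
    using IP_F1[of "N - j"] assms by (simp add: a_def algebra_simps)
  have i2: "IP (N - 1 + j) = (1 - b) * IP (N + j)"
    using IP_F1[of "N + j"] assms by (simp add: b_def algebra_simps)
  have i3: "IP (N + (j - 1)) = (1 - b) * IP (N + j)"
    using i2 by (simp add: algebra_simps)
  have i4: "IP (N - 1 - (j - 1)) = IP (N - j)" by (simp add: algebra_simps)
  have L: "trm N j * (1 - XX ^ nat (2*N)) = s * x * P * (1 - a*b)"
    unfolding trm_def ab by (simp add: s_def x_def P_def algebra_simps)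
  have R1: "trm (N - 1) j = s * x * P * ((1 - a) * (1 - b))"
    unfolding trm_def i1 i2 by (simp add: s_def x_def P_def algebra_simps)
  have R2: "DD N j = s * x * P * (b * (1 - a))"
    unfolding DD_def e1 i1 by (simp add: s_def x_def P_def algebra_simps)
  have R3: "DD N (j - 1) = - (s * x * P * (a * (1 - b)))"
    unfolding DD_def e2 sgm i3 i4 by (simp add: x_def P_def algebra_simps)
  show ?thesis unfolding L R1 R2 R3 by (simp add: algebra_simps)
qed

lemma telescope:
  fixes f :: "int \<Rightarrow> int fps"
  assumes "a - 1 \<le> b"
  shows "(\<Sum>j\<in>{a..b}. f j - f (j - 1)) = f b - f (a - 1)"
  using assms
proof (induction b rule: int_ge_induct)
  case base then show ?case by simp
next
  case (step i)
  have "{a..i+1} = insert (i+1) {a..i}" using step by auto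
  moreover have "i + 1 \<notin> {a..i}" by simp
  ultimately have "(\<Sum>j\<in>{a..i+1}. f j - f (j - 1)) = (f (i+1) - f i) + (\<Sum>j\<in>{a..i}. f j - f (j - 1))"
    by simp
  also have "\<dots> = f (i+1) - f (a - 1)" using step by simp
  finally show ?case .
qed

definition SS :: "nat \<Rightarrow> int fps" where
  "SS N = (\<Sum>j\<in>{-int N..int N}. trm (int N) j)"

lemma SS_step: "SS (Suc N) * (1 - XX ^ (2 * Suc N)) = SS N"
proof -
  define M where "M = int (Suc N)"
  have M1: "M \<ge> 1" by (simp add: M_def)
  have ex: "2 * Suc N = nat (2*M)" by (simp add: M_def)
  have "SS (Suc N) * (1 - XX ^ (2 * Suc N)) = (\<Sum>j\<in>{-M..M}. trm M j * (1 - XX ^ nat (2*M)))"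
    unfolding SS_def ex M_def by (simp add: sum_distrib_right)
  also have "\<dots> = (\<Sum>j\<in>{-M..M}. trm (M - 1) j + (DD M j - DD M (j - 1)))"
    by (intro sum.cong refl) (simp add: key_j)
  also have "\<dots> = (\<Sum>j\<in>{-M..M}. trm (M - 1) j) + (DD M M - DD M (-M - 1))"
    using M1 by (simp add: sum.distrib telescope)
  also have "DD M M = 0" by (simp add: DD_def) (simp add: IP_def)
  also have "DD M (-M - 1) = 0" by (simp add: DD_def) (simp add: IP_def)
  also have "(\<Sum>j\<in>{-M..M}. trm (M - 1) j) = (\<Sum>j\<in>{-(M-1)..M-1}. trm (M - 1) j)"
  proof -
    have "{-M..M} = {-(M-1)..M-1} \<union> {-M, M}" using M1 by auto
    moreover have "trm (M - 1) M = 0" "trm (M - 1) (-M) = 0" by (simp_all add: trm_def IP_def)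
    ultimately show ?thesis
      by (intro sum.mono_neutral_right) auto
  qed
  also have "\<dots> = SS N" by (simp add: SS_def M_def)
  finally show ?thesis by simp
qed

definition QQ :: "nat \<Rightarrow> int fps" where "QQ N = (\<Prod>k\<in>{1..N}. (1 - XX ^ (2*k)))"

lemma SS_QQ: "SS N * QQ N = 1"
proof (induction N)
  case 0
  have "SS 0 = trm 0 0" by (simp add: SS_def)
  also have "\<dots> = 1" by (simp add: trm_def IP_def sg_def)
  finally show ?case by (simp add: QQ_def)
next
  case (Suc N)
  have q: "QQ (Suc N) = (1 - XX ^ (2 * Suc N)) * QQ N" by (simp add: QQ_def)
  have "SS (Suc N) * QQ (Suc N) = (SS (Suc N) * (1 - XX ^ (2 * Suc N))) * QQ N" by (simp only: q mult.assoc)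
  also have "\<dots> = 1" using SS_step Suc.IH by simp
  finally show ?case .
qed




lemma bc_mono: "bc T m f g \<Longrightarrow> T' \<le> T \<Longrightarrow> bc T' m f g"
  by (auto simp: bc_def)

lemma bc_sum: "finite A \<Longrightarrow> (\<And>a. a \<in> A \<Longrightarrow> bc T m (f a) (g a)) \<Longrightarrow> bc T m (\<Sum>a\<in>A. f a) (\<Sum>a\<in>A. g a)"
  by (induction A rule: finite_induct) (auto intro: bc_add bc_refl)

lemma prod_stable:
  assumes "\<And>k. T < k \<Longrightarrow> bc T 0 (F k) 1" "T \<le> N"
  shows "bc T 0 (\<Prod>k\<in>{1..N}. F k) (\<Prod>k\<in>{1..T}. F k)"
  using assms(2)
proof (induction N rule: dec_induct)
  case base then show ?case by (rule bc_refl)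
next
  case (step N)
  have "{1..Suc N} = insert (Suc N) {1..N}" by auto
  then have "(\<Prod>k\<in>{1..Suc N}. F k) = F (Suc N) * (\<Prod>k\<in>{1..N}. F k)" by simp
  moreover have "bc T 0 (F (Suc N) * (\<Prod>k\<in>{1..N}. F k)) (1 * (\<Prod>k\<in>{1..T}. F k))"
    using step assms(1)[of "Suc N"] by (intro bc_mult) auto
  ultimately show ?case by (simp add: mult.commute)
qed

lemma geo_one: "T < k \<Longrightarrow> bc T 0 (geo k) 1"
  unfolding bc0
proof (intro allI impI)
  fix n assume "T < k" "n < T"
  then have "k dvd n \<longleftrightarrow> n = 0" by (auto dest: dvd_imp_le)
  then show "fps_nth (geo k) n = fps_nth 1 n" by (simp add: geo_def)
qed

lemma xm_one: "T < k \<Longrightarrow> bc T 0 (1 - XX^k) 1"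
  unfolding bc0 by auto
lemma xp_one: "T < k \<Longrightarrow> bc T 0 (1 + XX^k) 1"
  unfolding bc0 by auto

lemma IP_nat: "IP (int M) = (\<Prod>k\<in>{1..M}. geo k)" by (simp add: IP_def)

lemma IP_stable: "T \<le> M \<Longrightarrow> bc T 0 (IP (int M)) (IP (int T))"
  unfolding IP_nat by (rule prod_stable) (auto intro: geo_one)

definition qp :: "nat \<Rightarrow> int fps" where "qp N = (\<Prod>k\<in>{1..N}. (1 - XX^k))"
definition qm :: "nat \<Rightarrow> int fps" where "qm N = (\<Prod>k\<in>{1..N}. (1 + XX^k))"

lemma QQ_split: "QQ N = qp N * qm N"
proof -
  have "QQ N = (\<Prod>k\<in>{1..N}. (1 - XX^k) * (1 + XX^k))"
    unfolding QQ_def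
  proof (intro prod.cong refl)
    fix k
    have "XX^(2*k) = XX^k * XX^k" by (simp add: mult_2 power_add)
    then show "1 - XX^(2*k) = (1 - XX^k) * (1 + XX^k)" by (simp add: algebra_simps)
  qed
  then show ?thesis by (simp add: qp_def qm_def prod.distrib)
qed

lemma IP_qp: "IP (int N) * qp N = 1"
proof -
  have "IP (int N) * qp N = (\<Prod>k\<in>{1..N}. geo k * (1 - XX^k))"
    by (simp add: IP_nat qp_def prod.distrib)
  also have "\<dots> = 1" by (intro prod.neutral ballI geo_mul) auto
  finally show ?thesis .
qed

lemma mono_low: "n < k \<Longrightarrow> fps_nth (fps_const c * XX^k * F) n = 0"
  by (simp add: mult.assoc fps_X_power_mult_nth)

lemma trm_approx:
  assumes "2*T \<le> N" "j \<in> {-int N..int N}"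
  shows "bc T 0 (trm (int N) j) (fps_const (sg j) * XX ^ nat (j*j) * (IP (int T) * IP (int T)))"
proof (cases "int T \<le> j*j")
  case True
  show ?thesis unfolding bc0
  proof (intro allI impI)
    fix n assume "n < T"
    then have "n < nat (j*j)" using True by linarith
    have t: "trm (int N) j = fps_const (sg j) * XX ^ nat (j*j) * (IP (int N - j) * IP (int N + j))"
      by (simp add: trm_def mult.assoc)
    show "fps_nth (trm (int N) j) n = fps_nth (fps_const (sg j) * XX ^ nat (j*j) * (IP (int T) * IP (int T))) n"
      by (simp only: t mono_low[OF \<open>n < nat (j*j)\<close>])
  qed
next
  case False
  then have "\<bar>j\<bar> < int T" using abs_le_sq[of j] by linarith
  then have c1: "int T \<le> int N - j" "int T \<le> int N + j" using assms by auto
  have e1: "int N - j = int (nat (int N - j))" "int N + j = int (nat (int N + j))" using c1 by auto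
  have b1: "bc T 0 (IP (int N - j)) (IP (int T))"
    by (subst e1(1), rule IP_stable) (use c1 in linarith)
  have b2: "bc T 0 (IP (int N + j)) (IP (int T))"
    by (subst e1(2), rule IP_stable) (use c1 in linarith)
  have "bc T 0 (fps_const (sg j) * XX ^ nat (j*j) * (IP (int N - j) * IP (int N + j)))
               (fps_const (sg j) * XX ^ nat (j*j) * (IP (int T) * IP (int T)))"
    by (intro bc_mult bc_refl b1 b2)
  then show ?thesis unfolding trm_def by (simp add: mult.assoc)
qed

lemma trunc_main:
  assumes "0 < T"
  shows "bc T 0 (Th * (IP (int T) * qm T)) 1"
proof -
  define N where "N = 2*T"
  define W where "W = IP (int T) * IP (int T)"
  have "bc T 0 (SS N) (\<Sum>j\<in>{-int N..int N}. fps_const (sg j) * XX ^ nat (j*j) * W)"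
    unfolding SS_def W_def by (intro bc_sum trm_approx) (auto simp: N_def)
  also have "(\<Sum>j\<in>{-int N..int N}. fps_const (sg j) * XX ^ nat (j*j) * W) = thN N * W"
    by (simp add: thN_def sum_distrib_right)
  finally have s1: "bc T 0 (SS N) (thN N * W)" .
  have q1: "bc T 0 (QQ N) (qp T * qm T)"
    unfolding QQ_split qp_def qm_def
    by (intro bc_mult prod_stable) (auto simp: N_def intro: xm_one xp_one)
  have "bc T 0 (SS N * QQ N) (thN N * W * (qp T * qm T))" using s1 q1 by (rule bc_mult)
  moreover have "thN N * W * (qp T * qm T) = thN N * (IP (int T) * qm T)"
  proof -
    have "thN N * W * (qp T * qm T) = thN N * (IP (int T) * qm T) * (IP (int T) * qp T)"
      by (simp add: W_def algebra_simps)
    then show ?thesis using IP_qp by simp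
  qed
  ultimately have "bc T 0 1 (thN N * (IP (int T) * qm T))" using SS_QQ by simp
  moreover have "bc T 0 (thN N) Th"
    by (rule bc_sym, rule bc_mono[OF bc_Th]) (simp add: N_def)
  then have "bc T 0 (thN N * (IP (int T) * qm T)) (Th * (IP (int T) * qm T))"
    by (intro bc_mult bc_refl)
  ultimately show ?thesis by (meson bc_sym bc_trans)
qed




lemma mem_le_sum: "(x::nat) \<in># A \<Longrightarrow> x \<le> sum_mset A"
proof -
  assume "x \<in># A"
  then obtain B where "A = add_mset x B" by (blast dest: multi_member_split)
  then show ?thesis by simp
qed

lemma size_le_sum: "(\<forall>x\<in>#A. (0::nat) < x) \<Longrightarrow> size A \<le> sum_mset A"
  by (induction A) auto

lemma count_le_sum: "count A k * k \<le> sum_mset (A::nat multiset)"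
proof -
  have sub: "replicate_mset (count A k) k \<subseteq># A" by (simp flip: count_le_replicate_mset_subset_eq)
  then have "A = replicate_mset (count A k) k + (A - replicate_mset (count A k) k)"
    by (simp add: subset_mset.add_diff_inverse)
  then have "sum_mset A = count A k * k + sum_mset (A - replicate_mset (count A k) k)"
    by (metis sum_mset.union sum_mset_replicate_mset of_nat_id)
  then show ?thesis by simp
qed

lemma finite_overpartitions: "finite (overpartitions n)"
proof -
  have "overpartitions n \<subseteq> (\<Union>s\<in>{0..n}. multisets_of_size {1..n} s) \<times> Pow {1..n}"
  proof
    fix x assume "x \<in> overpartitions n"
    then obtain A S where x: "x = (A,S)" "\<forall>x\<in>#A. 0 < x" "sum_mset A = n" "S \<subseteq> set_mset A"
      by (auto simp: overpartitions_def)
    have sA: "set_mset A \<subseteq> {1..n}" using x mem_le_sum by fastforce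
    have "size A \<le> n" using size_le_sum[OF x(2)] x(3) by simp
    then have "A \<in> (\<Union>s\<in>{0..n}. multisets_of_size {1..n} s)" using sA by (auto simp: multisets_of_size_def)
    moreover have "S \<in> Pow {1..n}" using x(4) sA by auto
    ultimately show "x \<in> (\<Union>s\<in>{0..n}. multisets_of_size {1..n} s) \<times> Pow {1..n}" using x by auto
  qed
  moreover have "finite ((\<Union>s\<in>{0..n}. multisets_of_size {1..n} s) \<times> Pow {1..n})" by auto
  ultimately show ?thesis by (rule finite_subset)
qed

definition OP :: "nat set \<Rightarrow> nat \<Rightarrow> (nat multiset \<times> nat set) set" where
  "OP K n = {x\<in>overpartitions n. set_mset (fst x) \<subseteq> K}"

lemma finite_OP: "finite (OP K n)"
  unfolding OP_def by (rule finite_subset[OF _ finite_overpartitions]) auto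

definition ogf :: "nat \<Rightarrow> int fps" where "ogf k = (1 + XX^k) * geo k"

lemma ogf_nth: "k > 0 \<Longrightarrow> fps_nth (ogf k) i = (if i = 0 then 1 else if k dvd i then 2 else 0)"
proof -
  assume k: "k > 0"
  have "fps_nth (ogf k) i = fps_nth (geo k) i + fps_nth (XX^k * geo k) i" by (simp add: ogf_def algebra_simps)
  also have "\<dots> = (if k dvd i then 1 else 0) + (if i < k then 0 else if k dvd (i - k) then 1 else 0)"
    by (simp add: geo_def fps_X_power_mult_nth)
  also have "\<dots> = (if i = 0 then 1 else if k dvd i then 2 else 0)"
  proof (cases "i < k")
    case True
    then have "k dvd i \<longleftrightarrow> i = 0" using k by (auto dest: dvd_imp_le)
    then show ?thesis using True by simp
  next
    case False
    then have "k dvd i \<longleftrightarrow> k dvd (i - k)" by (simp add: dvd_minus_self)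
    then show ?thesis using False k by auto
  qed
  finally show ?thesis .
qed

lemma OP_empty: "OP {} n = (if n = 0 then {({#}, {})} else {})"
  by (auto simp: OP_def overpartitions_def)

lemma E0_eq:
  assumes "k \<notin> K"
  shows "{x\<in>OP (insert k K) n. count (fst x) k = 0} = OP K n"
  using assms by (auto simp: OP_def count_eq_zero_iff)

lemma Ej_empty:
  assumes "n < j*k"
  shows "{x\<in>OP K' n. count (fst x) k = j} = {}"
proof -
  have le: "count (fst x) k * k \<le> n" if "x \<in> OP K' n" for x
    using count_le_sum[of "fst x" k] that by (auto simp: OP_def overpartitions_def)
  show ?thesis
  proof (intro equalityI subsetI)
    fix x assume "x \<in> {x\<in>OP K' n. count (fst x) k = j}"
    then have "x \<in> OP K' n" "count (fst x) k = j" by auto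
    with le[of x] assms have False by simp
    then show "x \<in> {}" ..
  qed simp
qed

lemma Ej_card:
  assumes k: "k > 0" "k \<notin> K" and j: "j \<ge> 1" "j*k \<le> n"
  shows "card {x\<in>OP (insert k K) n. count (fst x) k = j} = 2 * card (OP K (n - j*k))"
proof -
  define R where "R = replicate_mset j k"
  define E where "E = {x\<in>OP (insert k K) n. count (fst x) k = j}"
  define f where "f = (\<lambda>(A::nat multiset, S::nat set). ((A - R, S - {k}), k \<in> S))"
  define g where "g = (\<lambda>((A::nat multiset, S::nat set), b::bool). (A + R, if b then insert k S else S))"
  have bij: "bij_betw f E (OP K (n - j*k) \<times> (UNIV :: bool set))"
  proof (rule bij_betw_byWitness[where f' = g])
    show "\<forall>a\<in>E. g (f a) = a"
    proof
      fix a assume "a \<in> E"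
      then obtain A S where a: "a = (A,S)" "count A k = j" by (cases a) (auto simp: E_def)
      have "R \<subseteq># A" using a by (simp add: R_def flip: count_le_replicate_mset_subset_eq)
      then have "A - R + R = A" by (simp add: subset_mset.diff_add)
      then show "g (f a) = a" using a by (auto simp: f_def g_def)
    qed
    show "\<forall>b\<in>OP K (n - j*k) \<times> (UNIV :: bool set). f (g b) = b"
    proof
      fix b assume "b \<in> OP K (n - j*k) \<times> (UNIV :: bool set)"
      then obtain A S c where b: "b = ((A,S),c)" "set_mset A \<subseteq> K" "S \<subseteq> set_mset A"
        by (auto simp: OP_def overpartitions_def)
      have "k \<notin> S" using b k by auto
      then show "f (g b) = b" using b by (auto simp: f_def g_def)
    qed
    show "f ` E \<subseteq> OP K (n - j*k) \<times> (UNIV :: bool set)"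
    proof
      fix y assume "y \<in> f ` E"
      then obtain A S where AS: "(A,S) \<in> E" "y = f (A,S)" by auto
      have pos: "\<forall>x\<in>#A. 0 < x" and sA: "sum_mset A = n" and SA: "S \<subseteq> set_mset A"
        and sK: "set_mset A \<subseteq> insert k K" and cA: "count A k = j"
        using AS(1) by (auto simp: E_def OP_def overpartitions_def)
      have sub: "R \<subseteq># A" using cA by (simp add: R_def flip: count_le_replicate_mset_subset_eq)
      then have AR: "A = (A - R) + R" by (simp add: subset_mset.diff_add)
      have "sum_mset A = sum_mset (A - R) + j*k"
        by (subst AR) (simp add: R_def)
      then have s': "sum_mset (A - R) = n - j*k" using sA by simp
      have pos': "\<forall>x\<in>#A - R. 0 < x" using pos by (auto dest: in_diffD)
      have ck: "count (A - R) k = 0" using cA by (simp add: R_def)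
      have sK': "set_mset (A - R) \<subseteq> K"
      proof
        fix x
        assume xAR: "x \<in># A - R"
        then have "x \<in># A" by (rule in_diffD)
        moreover have "x \<noteq> k"
        proof
          assume "x = k"
          with xAR have "0 < count (A - R) k" by (simp del: count_diff)
          with ck show False by simp
        qed
        ultimately have "x \<in># A" "x \<noteq> k" by auto
        then show "x \<in> K" using sK by auto
      qed
      have SA': "S - {k} \<subseteq> set_mset (A - R)"
      proof
        fix x assume "x \<in> S - {k}"
        then have "x \<in># A" "x \<noteq> k" using SA by auto
        then show "x \<in># A - R" by (simp add: R_def count_eq_zero_iff[symmetric] in_diff_count)
      qed
      show "y \<in> OP K (n - j*k) \<times> (UNIV :: bool set)"
        using AS(2) s' pos' sK' SA' by (simp add: f_def OP_def overpartitions_def)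
    qed
    show "g ` (OP K (n - j*k) \<times> (UNIV :: bool set)) \<subseteq> E"
    proof
      fix y assume "y \<in> g ` (OP K (n - j*k) \<times> (UNIV :: bool set))"
      then obtain A S c where y: "y = g ((A,S),c)" "(A,S) \<in> OP K (n - j*k)" by auto
      have pos: "\<forall>x\<in>#A. 0 < x" and sA: "sum_mset A = n - j*k" and SA: "S \<subseteq> set_mset A"
        and sK: "set_mset A \<subseteq> K"
        using y(2) by (auto simp: OP_def overpartitions_def)
      have kA: "count A k = 0" using sK k by (auto simp: count_eq_zero_iff)
      have kR: "k \<in># A + R" using j by (simp add: R_def)
      have "(\<forall>x\<in>#A + R. 0 < x)" using pos k by (auto simp: R_def)
      moreover have "sum_mset (A + R) = n" using sA j by (simp add: R_def)
      moreover have "(if c then insert k S else S) \<subseteq> set_mset (A + R)" using SA kR by auto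
      moreover have "set_mset (A + R) \<subseteq> insert k K" using sK by (auto simp: R_def)
      moreover have "count (A + R) k = j" using kA by (simp add: R_def)
      ultimately show "y \<in> E" using y(1) by (simp add: g_def E_def OP_def overpartitions_def)
    qed
  qed
  have "card E = card (OP K (n - j*k) \<times> (UNIV :: bool set))" using bij by (rule bij_betw_same_card)
  also have "\<dots> = card (OP K (n - j*k)) * 2" by (simp add: card_cartesian_product)
  finally show ?thesis by (simp add: E_def)
qed


lemma card_fiber:
  assumes "finite S" "finite R" "g ` S \<subseteq> R"
  shows "int (card S) = (\<Sum>y\<in>R. int (card {x\<in>S. g x = y}))"
  using sum_fun_comp[OF assms, of "\<lambda>_. (1::int)"] by simp

lemma prod_ogf:
  assumes "finite K" "0 \<notin> K"
  shows "fps_nth (\<Prod>k\<in>K. ogf k) n = int (card (OP K n))"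
  using assms
proof (induction K arbitrary: n rule: finite_induct)
  case empty
  then show ?case by (simp add: OP_empty)
next
  case (insert k K)
  have k: "k > 0" "k \<notin> K" using insert by auto
  have IH: "fps_nth (\<Prod>k\<in>K. ogf k) m = int (card (OP K m))" for m using insert by auto
  define P where "P = (\<Prod>k\<in>K. ogf k)"
  define c where "c = (\<lambda>i. if i = 0 then fps_nth P n else if k dvd i then 2 * fps_nth P (n - i) else 0)"
  have "fps_nth (\<Prod>k\<in>insert k K. ogf k) n = fps_nth (ogf k * P) n"
    using insert by (simp add: P_def)
  also have "\<dots> = (\<Sum>i=0..n. c i)"
    unfolding fps_mult_nth by (intro sum.cong refl) (simp add: ogf_nth k c_def)
  also have "\<dots> = (\<Sum>i\<in>(\<lambda>j. j*k) ` {j\<in>{0..n}. j*k \<le> n}. c i)"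
  proof (rule sum.mono_neutral_right)
    show "(\<lambda>j. j*k) ` {j\<in>{0..n}. j*k \<le> n} \<subseteq> {0..n}" by auto
    show "\<forall>i\<in>{0..n} - (\<lambda>j. j*k) ` {j\<in>{0..n}. j*k \<le> n}. c i = 0"
    proof
      fix i assume i: "i \<in> {0..n} - (\<lambda>j. j*k) ` {j\<in>{0..n}. j*k \<le> n}"
      have "\<not> k dvd i"
      proof
        assume "k dvd i"
        then obtain j where ij: "i = j*k" by (metis dvd_def mult.commute)
        have "j \<le> j*k" using k by simp
        moreover have "i \<le> n" using i by simp
        ultimately have "j \<le> n" "j*k \<le> n" using ij by linarith+
        then show False using i ij by auto
      qed
      moreover have "i \<noteq> 0" using i by force
      ultimately show "c i = 0" by (simp add: c_def)
    qed
  qed simp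
  also have "\<dots> = (\<Sum>j\<in>{j\<in>{0..n}. j*k \<le> n}. c (j*k))"
    using k by (subst sum.reindex) (auto simp: inj_on_def)
  also have "\<dots> = (\<Sum>j\<in>{0..n}. if j*k \<le> n then c (j*k) else 0)"
    by (rule sum.inter_filter) simp
  also have "\<dots> = (\<Sum>j\<in>{0..n}. int (card {x\<in>OP (insert k K) n. count (fst x) k = j}))"
  proof (intro sum.cong refl)
    fix j assume j: "j \<in> {0..n}"
    show "(if j*k \<le> n then c (j*k) else 0) = int (card {x\<in>OP (insert k K) n. count (fst x) k = j})"
    proof (cases "j = 0")
      case True
      then show ?thesis using E0_eq[OF k(2)] IH by (simp add: c_def P_def)
    next
      case False
      show ?thesis
      proof (cases "j*k \<le> n")
        case True
        have "c (j*k) = 2 * int (card (OP K (n - j*k)))"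
          using False k IH by (simp add: c_def P_def)
        then show ?thesis using Ej_card[OF k, of j n] True False by simp
      next
        case f2: False
        then have "n < j*k" by simp
        then have E: "{x\<in>OP (insert k K) n. count (fst x) k = j} = {}" by (rule Ej_empty)
        show ?thesis using f2 by (simp only: E card.empty) simp
      qed
    qed
  qed
  also have "\<dots> = int (card (OP (insert k K) n))"
  proof (rule card_fiber[symmetric])
    show "finite (OP (insert k K) n)" by (rule finite_OP)
    show "finite {0..n}" by simp
    show "(\<lambda>x. count (fst x) k) ` OP (insert k K) n \<subseteq> {0..n}"
    proof
      fix y assume "y \<in> (\<lambda>x. count (fst x) k) ` OP (insert k K) n"
      then obtain x where x: "x \<in> OP (insert k K) n" "y = count (fst x) k" by auto
      have "count (fst x) k * k \<le> n"
        using count_le_sum[of "fst x" k] x(1) by (auto simp: OP_def overpartitions_def)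
      moreover have "count (fst x) k \<le> count (fst x) k * k" using k by simp
      ultimately have "count (fst x) k \<le> n" by linarith
      then show "y \<in> {0..n}" using x by simp
    qed
  qed
  finally show ?case .
qed

lemma comb:
  assumes "n \<le> T"
  shows "fps_nth (IP (int T) * qm T) n = int (overpartition_count n)"
proof -
  have "IP (int T) * qm T = (\<Prod>k\<in>{1..T}. ogf k)"
    by (simp add: IP_nat qm_def ogf_def prod.distrib mult.commute)
  moreover have "OP {1..T} n = overpartitions n"
  proof (intro equalityI subsetI)
    fix x assume "x \<in> overpartitions n"
    then obtain A S where x: "x = (A,S)" "\<forall>x\<in>#A. 0 < x" "sum_mset A = n"
      by (auto simp: overpartitions_def)
    have "set_mset A \<subseteq> {1..T}" using x assms mem_le_sum by fastforce
    then show "x \<in> OP {1..T} n" using \<open>x \<in> overpartitions n\<close> x by (simp add: OP_def)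
  qed (simp add: OP_def)
  ultimately show ?thesis using prod_ogf[of "{1..T}" n] by (simp add: overpartition_count_def)
qed

definition Gb :: "int fps" where "Gb = Abs_fps (\<lambda>n. int (overpartition_count n))"

lemma GAUSS: "Th * Gb = 1"
proof (rule fps_ext)
  fix n
  define T where "T = Suc n"
  have "bc T 0 Gb (IP (int T) * qm T)"
    unfolding bc0 Gb_def by (auto simp: comb)
  then have "bc T 0 (Th * Gb) (Th * (IP (int T) * qm T))" by (intro bc_mult bc_refl)
  moreover have "bc T 0 (Th * (IP (int T) * qm T)) 1" by (rule trunc_main) (simp add: T_def)
  ultimately have "bc T 0 (Th * Gb) 1" by (rule bc_trans)
  then show "fps_nth (Th * Gb) n = fps_nth 1 n" by (simp add: bc0 T_def)
qed




type_synonym q4 = "int \<times> int \<times> int \<times> int"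

fun qmul :: "q4 \<Rightarrow> q4 \<Rightarrow> q4" where
"qmul (a1,b1,c1,d1) (a2,b2,c2,d2) = (a1*a2-b1*b2-c1*c2-d1*d2, a1*b2+b1*a2+c1*d2-d1*c2, a1*c2-b1*d2+c1*a2+d1*b2, a1*d2+b1*c2-c1*b2+d1*a2)"
fun cnj :: "q4 \<Rightarrow> q4" where "cnj (a,b,c,d) = (a,-b,-c,-d)"
fun nrm :: "q4 \<Rightarrow> int" where "nrm (a,b,c,d) = a*a+b*b+c*c+d*d"
fun dv5 :: "q4 \<Rightarrow> bool" where "dv5 (a,b,c,d) = (5 dvd a \<and> 5 dvd b \<and> 5 dvd c \<and> 5 dvd d)"
fun sc :: "int \<Rightarrow> q4 \<Rightarrow> q4" where "sc k (a,b,c,d) = (k*a,k*b,k*c,k*d)"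
fun dq5 :: "q4 \<Rightarrow> q4" where "dq5 (a,b,c,d) = (a div 5, b div 5, c div 5, d div 5)"
fun md5 :: "q4 \<Rightarrow> q4" where "md5 (a,b,c,d) = (a mod 5, b mod 5, c mod 5, d mod 5)"

definition "rng = [-2,-1,0,1,2::int]"
definition "PiL = filter (\<lambda>p. nrm p = 5) (List.product rng (List.product rng (List.product rng rng)))"
definition "r5 = [0,1,2,3,4::int]"
definition "YL = filter (\<lambda>p. 5 dvd nrm p \<and> p \<noteq> (0,0,0,0)) (List.product r5 (List.product r5 (List.product r5 r5)))"

lemma chk: "list_all (\<lambda>y. length (filter (\<lambda>p. dv5 (qmul y (cnj p))) PiL) = 8) YL"
  by code_simp
lemma PiL_len: "length PiL = 48" by code_simp
lemma PiL_dist: "distinct PiL" by code_simp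

lemma I1: "nrm (qmul x y) = nrm x * nrm y"
  by (cases x; cases y) (simp add: algebra_simps)
lemma I2: "qmul (qmul x y) (cnj y) = sc (nrm y) x"
  by (cases x; cases y) (simp add: algebra_simps)
lemma I3: "qmul (qmul x (cnj y)) y = sc (nrm y) x"
  by (cases x; cases y) (simp add: algebra_simps)
lemma I4: "qmul (sc k x) y = sc k (qmul x y)"
  by (cases x; cases y) (simp add: algebra_simps)
lemma I5: "nrm (sc k x) = k*k*nrm x"
  by (cases x) (simp add: algebra_simps)
lemma I6: "nrm (cnj p) = nrm p"
  by (cases p) simp
lemma I7: "sc 5 x = sc 5 x' \<Longrightarrow> x = x'"
  by (cases x; cases x') simp
lemma dv5_sc: "dv5 x \<Longrightarrow> x = sc 5 (dq5 x)"
  by (cases x) (auto elim!: dvdE)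
lemma sc_dv5: "dv5 (sc 5 x)"
  by (cases x) simp


definition Pi5 :: "q4 set" where "Pi5 = {p. nrm p = 5}"
definition R :: "int \<Rightarrow> q4 set" where "R n = {x. nrm x = n}"

lemma sq_bound: "(a::int)*a + b*b + c*c + d*d = n \<Longrightarrow> \<bar>a\<bar> \<le> n"
proof -
  assume h: "a*a + b*b + c*c + d*d = n"
  have "\<bar>a\<bar> \<le> a*a"
  proof (cases "a = 0")
    case False
    then have "1 \<le> \<bar>a\<bar>" by simp
    then have "\<bar>a\<bar> * 1 \<le> \<bar>a\<bar> * \<bar>a\<bar>" by (intro mult_left_mono) auto
    then show ?thesis by (simp add: abs_mult_self_eq)
  qed simp
  moreover have "0 \<le> b*b" "0 \<le> c*c" "0 \<le> d*d" by auto
  ultimately show ?thesis using h by linarith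
qed

lemma R_sub: "R n \<subseteq> {-n..n} \<times> {-n..n} \<times> {-n..n} \<times> {-n..n}"
proof
  fix x assume "x \<in> R n"
  obtain a b c d where x: "x = (a,b,c,d)" by (cases x) auto
  have h: "a*a + b*b + c*c + d*d = n" using \<open>x \<in> R n\<close> x by (simp add: R_def)
  have "\<bar>a\<bar> \<le> n" using sq_bound[OF h] .
  moreover have "\<bar>b\<bar> \<le> n" using sq_bound[of b a c d n] h by (simp add: algebra_simps)
  moreover have "\<bar>c\<bar> \<le> n" using sq_bound[of c a b d n] h by (simp add: algebra_simps)
  moreover have "\<bar>d\<bar> \<le> n" using sq_bound[of d a b c n] h by (simp add: algebra_simps)
  ultimately show "x \<in> {-n..n} \<times> {-n..n} \<times> {-n..n} \<times> {-n..n}" using x by auto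
qed

lemma R_fin: "finite (R n)"
  by (rule finite_subset[OF R_sub]) auto

lemma sq_le5: "(a::int)*a \<le> 5 \<Longrightarrow> a \<in> {-2,-1,0,1,2}"
proof (rule ccontr)
  assume "a*a \<le> 5" "a \<notin> {-2,-1,0,1,2}"
  then have "3 \<le> \<bar>a\<bar>" by auto
  then have "3*3 \<le> \<bar>a\<bar>*\<bar>a\<bar>" by (intro mult_mono) auto
  then show False using \<open>a*a \<le> 5\<close> by (simp add: abs_mult_self_eq)
qed

lemma Pi5_eq: "Pi5 = set PiL"
proof (intro set_eqI iffI)
  fix p assume "p \<in> Pi5"
  obtain a b c d where p: "p = (a,b,c,d)" by (cases p) auto
  have h: "a*a+b*b+c*c+d*d = 5" using \<open>p \<in> Pi5\<close> p by (simp add: Pi5_def)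
  have "0 \<le> a*a" "0 \<le> b*b" "0 \<le> c*c" "0 \<le> d*d" by simp_all
  then have "a*a \<le> 5" "b*b \<le> 5" "c*c \<le> 5" "d*d \<le> 5" using h by linarith+
  then have "a \<in> set rng" "b \<in> set rng" "c \<in> set rng" "d \<in> set rng"
    using sq_le5 by (auto simp: rng_def)
  then show "p \<in> set PiL" using h p by (simp add: PiL_def)
next
  fix p assume "p \<in> set PiL"
  then show "p \<in> Pi5" by (auto simp: PiL_def Pi5_def)
qed

lemma card_Pi5: "card Pi5 = 48"
  using PiL_len PiL_dist by (simp add: Pi5_eq distinct_card)

lemma dv5_qmul: "dv5 y \<Longrightarrow> dv5 (qmul y q)"
proof -
  assume "dv5 y"
  then have "y = sc 5 (dq5 y)" by (rule dv5_sc)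
  then have "qmul y q = sc 5 (qmul (dq5 y) q)" by (metis I4)
  then show ?thesis by (simp add: sc_dv5)
qed

lemma dvd5_lin: "5 dvd (x + 5*y) \<longleftrightarrow> 5 dvd (x::int)"
  by (metis dvd_add_left_iff dvd_triv_left)

lemma dv5_lin: "dv5 (qmul (a0+5*a1, b0+5*b1, c0+5*c1, d0+5*d1) (e,f,g,h)) \<longleftrightarrow> dv5 (qmul (a0,b0,c0,d0) (e,f,g,h))"
proof -
  have 1: "(a0+5*a1)*e - (b0+5*b1)*f - (c0+5*c1)*g - (d0+5*d1)*h = (a0*e - b0*f - c0*g - d0*h) + 5*(a1*e - b1*f - c1*g - d1*h)"
    by (simp add: algebra_simps)
  have 2: "(a0+5*a1)*f + (b0+5*b1)*e + (c0+5*c1)*h - (d0+5*d1)*g = (a0*f + b0*e + c0*h - d0*g) + 5*(a1*f + b1*e + c1*h - d1*g)"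
    by (simp add: algebra_simps)
  have 3: "(a0+5*a1)*g - (b0+5*b1)*h + (c0+5*c1)*e + (d0+5*d1)*f = (a0*g - b0*h + c0*e + d0*f) + 5*(a1*g - b1*h + c1*e + d1*f)"
    by (simp add: algebra_simps)
  have 4: "(a0+5*a1)*h + (b0+5*b1)*g - (c0+5*c1)*f + (d0+5*d1)*e = (a0*h + b0*g - c0*f + d0*e) + 5*(a1*h + b1*g - c1*f + d1*e)"
    by (simp add: algebra_simps)
  show ?thesis by (simp only: qmul.simps dv5.simps 1 2 3 4 dvd5_lin)
qed

lemma dv5_md5: "dv5 (qmul y q) \<longleftrightarrow> dv5 (qmul (md5 y) q)"
proof -
  obtain a b c d where y: "y = (a,b,c,d)" by (cases y) auto
  obtain e f g h where q: "q = (e,f,g,h)" by (cases q) auto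
  have y': "y = (a mod 5 + 5*(a div 5), b mod 5 + 5*(b div 5), c mod 5 + 5*(c div 5), d mod 5 + 5*(d div 5))"
    using y by simp
  show ?thesis by (subst y') (simp only: q y md5.simps dv5_lin)
qed

lemma nrm_lin: "nrm (a0+5*a1, b0+5*b1, c0+5*c1, d0+5*d1) = nrm (a0,b0,c0,d0) + 5*(2*a0*a1 + 5*a1*a1 + 2*b0*b1 + 5*b1*b1 + 2*c0*c1 + 5*c1*c1 + 2*d0*d1 + 5*d1*d1)"
  by (simp add: algebra_simps)

lemma md5_YL:
  assumes "5 dvd nrm y" "\<not> dv5 y"
  shows "md5 y \<in> set YL"
proof -
  obtain a b c d where y: "y = (a,b,c,d)" by (cases y) auto
  have y': "y = (a mod 5 + 5*(a div 5), b mod 5 + 5*(b div 5), c mod 5 + 5*(c div 5), d mod 5 + 5*(d div 5))"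
    using y by simp
  have "5 dvd nrm (a mod 5 + 5*(a div 5), b mod 5 + 5*(b div 5), c mod 5 + 5*(c div 5), d mod 5 + 5*(d div 5))"
    using assms(1) y' by simp
  then have n5: "5 dvd nrm (md5 y)" unfolding nrm_lin dvd5_lin using y by simp
  have nz: "md5 y \<noteq> (0,0,0,0)" using assms(2) y by (auto simp: dvd_eq_mod_eq_0)
  have r: "x mod 5 \<in> set r5" for x :: int
  proof -
    have "0 \<le> x mod 5" "x mod 5 < 5" by simp_all
    then show ?thesis by (auto simp: r5_def)
  qed
  show ?thesis using n5 nz r y by (simp add: YL_def)
qed

lemma count8:
  assumes "nrm y = 5*m" "\<not> dv5 y"
  shows "card {p\<in>Pi5. dv5 (qmul y (cnj p))} = 8"
proof -
  have "md5 y \<in> set YL" using assms by (intro md5_YL) auto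
  then have L: "length (filter (\<lambda>p. dv5 (qmul (md5 y) (cnj p))) PiL) = 8"
    using chk by (simp add: list_all_iff)
  have "{p\<in>Pi5. dv5 (qmul y (cnj p))} = set (filter (\<lambda>p. dv5 (qmul (md5 y) (cnj p))) PiL)"
    using dv5_md5 by (auto simp: Pi5_eq)
  then show ?thesis using L PiL_dist by (metis distinct_card distinct_filter)
qed

lemma count48:
  assumes "dv5 y"
  shows "card {p\<in>Pi5. dv5 (qmul y (cnj p))} = 48"
proof -
  have "{p\<in>Pi5. dv5 (qmul y (cnj p))} = Pi5" using dv5_qmul[OF assms] by auto
  then show ?thesis using card_Pi5 by simp
qed

lemma arith_aux: "(r::int) * 48 = 48*z + 8*w \<Longrightarrow> s = z + w \<Longrightarrow> s - r = 5*(r - z)"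
  by presburger

lemma r4_cong: "5 dvd (int (card (R (5*m))) - int (card (R m)))"
proof -
  define A where "A = R m \<times> Pi5"
  define B where "B = Sigma (R (5*m)) (\<lambda>y. {p\<in>Pi5. dv5 (qmul y (cnj p))})"
  have finPi: "finite Pi5" by (simp add: Pi5_eq)
  have bij: "bij_betw (\<lambda>(x,p). (qmul x p, p)) A B"
  proof (rule bij_betwI[where g = "\<lambda>(y,p). (dq5 (qmul y (cnj p)), p)"])
    show "(\<lambda>(x,p). (qmul x p, p)) \<in> A \<rightarrow> B"
    proof
      fix xp assume "xp \<in> A"
      then obtain x p where xp: "xp = (x,p)" "nrm x = m" "nrm p = 5" by (auto simp: A_def R_def Pi5_def)
      have "nrm (qmul x p) = 5*m" using xp by (simp add: I1)
      moreover have "dv5 (qmul (qmul x p) (cnj p))" using xp by (simp add: I2 sc_dv5)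
      ultimately show "(\<lambda>(x,p). (qmul x p, p)) xp \<in> B" using xp by (simp add: B_def R_def Pi5_def)
    qed
    show "(\<lambda>(y,p). (dq5 (qmul y (cnj p)), p)) \<in> B \<rightarrow> A"
    proof
      fix yp assume "yp \<in> B"
      then obtain y p where yp: "yp = (y,p)" "nrm y = 5*m" "nrm p = 5" "dv5 (qmul y (cnj p))"
        by (auto simp: B_def R_def Pi5_def)
      define x where "x = dq5 (qmul y (cnj p))"
      have "sc 5 x = qmul y (cnj p)" unfolding x_def using dv5_sc[OF yp(4)] by simp
      then have "nrm (sc 5 x) = nrm y * nrm (cnj p)" by (simp add: I1)
      then have "25 * nrm x = 25 * m" using yp by (simp add: I5 I6)
      then have "nrm x = m" by simp
      then show "(\<lambda>(y,p). (dq5 (qmul y (cnj p)), p)) yp \<in> A" using yp by (simp add: A_def R_def Pi5_def x_def)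
    qed
    show "(\<lambda>(y,p). (dq5 (qmul y (cnj p)), p)) ((\<lambda>(x,p). (qmul x p, p)) xp) = xp" if "xp \<in> A" for xp
    proof -
      obtain x p where xp0: "xp = (x,p)" by (cases xp)
      have xp: "xp = (x,p)" "nrm p = 5" using that xp0 by (auto simp: A_def Pi5_def)
      have "qmul (qmul x p) (cnj p) = sc 5 x" using xp by (simp add: I2)
      moreover have "dq5 (sc 5 x) = x" by (cases x) simp
      ultimately show ?thesis using xp by simp
    qed
    show "(\<lambda>(x,p). (qmul x p, p)) ((\<lambda>(y,p). (dq5 (qmul y (cnj p)), p)) yp) = yp" if "yp \<in> B" for yp
    proof -
      obtain y p where yp0: "yp = (y,p)" by (cases yp)
      have yp: "yp = (y,p)" "nrm p = 5" "dv5 (qmul y (cnj p))"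
        using that yp0 by (auto simp: B_def Pi5_def)
      define x where "x = dq5 (qmul y (cnj p))"
      have "sc 5 x = qmul y (cnj p)" unfolding x_def using dv5_sc[OF yp(3)] by simp
      then have "sc 5 (qmul x p) = qmul (qmul y (cnj p)) p" by (simp add: I4[symmetric])
      also have "\<dots> = sc 5 y" using yp by (simp add: I3)
      finally have "qmul x p = y" by (rule I7)
      then show ?thesis using yp by (simp add: x_def)
    qed
  qed
  have cA: "card A = card (R m) * 48" unfolding A_def using card_Pi5 by (simp add: card_cartesian_product)
  have "card B = (\<Sum>y\<in>R (5*m). card {p\<in>Pi5. dv5 (qmul y (cnj p))})"
    unfolding B_def using R_fin finPi by (intro card_SigmaI) auto
  also have "\<dots> = (\<Sum>y\<in>R (5*m) \<inter> Collect dv5. card {p\<in>Pi5. dv5 (qmul y (cnj p))})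
                 + (\<Sum>y\<in>R (5*m) - Collect dv5. card {p\<in>Pi5. dv5 (qmul y (cnj p))})"
    using R_fin by (rule sum.Int_Diff)
  also have "(\<Sum>y\<in>R (5*m) \<inter> Collect dv5. card {p\<in>Pi5. dv5 (qmul y (cnj p))}) = (\<Sum>y\<in>R (5*m) \<inter> Collect dv5. 48)"
    using count48 by (intro sum.cong refl) auto
  also have "(\<Sum>y\<in>R (5*m) - Collect dv5. card {p\<in>Pi5. dv5 (qmul y (cnj p))}) = (\<Sum>y\<in>R (5*m) - Collect dv5. 8)"
    using count8 by (intro sum.cong refl) (auto simp: R_def)
  finally have cB: "card B = 48 * card (R (5*m) \<inter> Collect dv5) + 8 * card (R (5*m) - Collect dv5)" by simp
  have split: "card (R (5*m)) = card (R (5*m) \<inter> Collect dv5) + card (R (5*m) - Collect dv5)"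
    using R_fin by (rule card_Int_Diff)
  have "card A = card B" using bij by (rule bij_betw_same_card)
  then have "card (R m) * 48 = 48 * card (R (5*m) \<inter> Collect dv5) + 8 * card (R (5*m) - Collect dv5)" using cA cB by simp
  then have e: "int (card (R m)) * 48 = 48 * int (card (R (5*m) \<inter> Collect dv5)) + 8 * int (card (R (5*m) - Collect dv5))"
    by (metis (mono_tags, lifting) of_nat_add of_nat_mult of_nat_numeral)
  have s: "int (card (R (5*m))) = int (card (R (5*m) \<inter> Collect dv5)) + int (card (R (5*m) - Collect dv5))"
    using split by simp
  have "int (card (R (5*m))) - int (card (R m)) = 5 * (int (card (R m)) - int (card (R (5*m) \<inter> Collect dv5)))"
    using arith_aux[OF e s] .
  then show ?thesis by simp
qed




definition mono4 :: "int \<Rightarrow> int fps" where "mono4 j = fps_const (sg j) * XX ^ nat (j*j)"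

lemma sg_sq: "sg (j*j) = sg j" by (simp add: sg_def)

lemma mono4_prod: "mono4 a * (mono4 b * (mono4 c * mono4 d)) =
   fps_const (sg (nrm (a,b,c,d))) * XX ^ nat (nrm (a,b,c,d))"
proof -
  have "mono4 a * (mono4 b * (mono4 c * mono4 d)) =
     fps_const (sg a * (sg b * (sg c * sg d))) * XX ^ (nat (a*a) + (nat (b*b) + (nat (c*c) + nat (d*d))))"
    by (simp add: mono4_def power_add algebra_simps)
  also have "sg a * (sg b * (sg c * sg d)) = sg (nrm (a,b,c,d))"
    by (simp only: nrm.simps sg_add sg_sq)
  also have "nat (a*a) + (nat (b*b) + (nat (c*c) + nat (d*d))) = nat (nrm (a,b,c,d))"
    by (simp add: nat_add_distrib)
  finally show ?thesis .
qed

lemma Th4_nth: "fps_nth (Th^4) n = sg (int n) * int (card (R (int n)))"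
proof -
  define I where "I = {-int n..int n}"
  have "bc (Suc n) 0 (Th^4) (thN n ^ 4)" by (intro bc_power bc_Th)
  then have e1: "fps_nth (Th^4) n = fps_nth (thN n ^ 4) n" by (simp add: bc0)
  have tn: "thN n = (\<Sum>j\<in>I. mono4 j)" by (simp add: thN_def mono4_def I_def)
  have "thN n ^ 4 = (\<Sum>j\<in>I. mono4 j) * ((\<Sum>j\<in>I. mono4 j) * ((\<Sum>j\<in>I. mono4 j) * (\<Sum>j\<in>I. mono4 j)))"
    by (simp add: tn eval_nat_numeral)
  also have "\<dots> = (\<Sum>a\<in>I. \<Sum>b\<in>I. \<Sum>c\<in>I. \<Sum>d\<in>I. mono4 a * (mono4 b * (mono4 c * mono4 d)))"
    by (simp add: sum_distrib_left[symmetric] sum_distrib_right[symmetric])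
  also have "\<dots> = (\<Sum>x\<in>I\<times>I\<times>I\<times>I. (case x of (a,b,c,d) \<Rightarrow> mono4 a * (mono4 b * (mono4 c * mono4 d))))"
    by (simp add: sum.cartesian_product case_prod_beta)
  also have "\<dots> = (\<Sum>x\<in>I\<times>I\<times>I\<times>I. fps_const (sg (nrm x)) * XX ^ nat (nrm x))"
    by (intro sum.cong refl) (auto simp: mono4_prod)
  finally have "fps_nth (thN n ^ 4) n = (\<Sum>x\<in>{x\<in>I\<times>I\<times>I\<times>I. nat (nrm x) = n}. sg (nrm x))"
    by (simp add: sum_monomials_nth I_def)
  also have "{x\<in>I\<times>I\<times>I\<times>I. nat (nrm x) = n} = R (int n)"
  proof
    show "{x\<in>I\<times>I\<times>I\<times>I. nat (nrm x) = n} \<subseteq> R (int n)"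
    proof
      fix x assume "x \<in> {x\<in>I\<times>I\<times>I\<times>I. nat (nrm x) = n}"
      moreover have "nrm x \<ge> 0" by (cases x) simp
      ultimately show "x \<in> R (int n)" by (auto simp: R_def)
    qed
    show "R (int n) \<subseteq> {x\<in>I\<times>I\<times>I\<times>I. nat (nrm x) = n}"
      using R_sub[of "int n"] by (auto simp: R_def I_def)
  qed
  also have "(\<Sum>x\<in>R (int n). sg (nrm x)) = (\<Sum>x\<in>R (int n). sg (int n))"
    by (intro sum.cong refl) (simp add: R_def)
  finally show ?thesis using e1 by simp
qed

lemma R4': "5 dvd (fps_nth (Th^4) (5*m) - fps_nth (Th^4) m)"
proof -
  have s: "sg (int (5*m)) = sg (int m)" by (simp add: sg_def)
  have "fps_nth (Th^4) (5*m) - fps_nth (Th^4) m = sg (int m) * (int (card (R (5 * int m))) - int (card (R (int m))))"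
    using s by (simp add: Th4_nth algebra_simps)
  then show ?thesis using r4_cong[of "int m"] by simp
qed




lemma mod3: "((x::int)+y+z) mod m = (x mod m + y mod m + z mod m) mod m"
proof -
  have "(x mod m + y mod m + z mod m) mod m = ((x mod m + y mod m) mod m + z mod m) mod m"
    by (rule mod_add_left_eq[symmetric])
  also have "(x mod m + y mod m) mod m = (x + y) mod m" by (simp add: mod_add_eq)
  also have "((x + y) mod m + z mod m) mod m = (x+y+z) mod m" by (simp add: mod_add_eq)
  finally show ?thesis by simp
qed

lemma m8aux: "x \<in> {0,1,4} \<Longrightarrow> y \<in> {0,1,4} \<Longrightarrow> z \<in> {0,1,4} \<Longrightarrow> (x+y+z) mod 8 \<noteq> (7::int)"
  by auto
lemma m4aux: "x \<in> {0,1} \<Longrightarrow> y \<in> {0,1} \<Longrightarrow> z \<in> {0,1} \<Longrightarrow> (x+y+z) mod 4 = (0::int) \<Longrightarrow> x = 0 \<and> y = 0 \<and> z = 0"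
  by auto

lemma sq_mod4: "(a::int)*a mod 4 = 0 \<or> a*a mod 4 = 1"
proof -
  have "a*a mod 4 = ((a mod 4)*(a mod 4)) mod 4" by (simp add: mod_mult_eq)
  moreover have "a mod 4 \<in> {0,1,2,3}" by auto
  ultimately show ?thesis by auto
qed

lemma sq_mod4_even: "(a::int)*a mod 4 = 0 \<longleftrightarrow> even a"
proof -
  have "a*a mod 4 = ((a mod 4)*(a mod 4)) mod 4" by (simp add: mod_mult_eq)
  moreover have "a mod 4 \<in> {0,1,2,3}" by auto
  moreover have "even a \<longleftrightarrow> even (a mod 4)" by (simp add: even_mod_4_div_2 dvd_mod_iff)
  ultimately show ?thesis by auto
qed

lemma sq_mod8: "(a::int)*a mod 8 \<in> {0,1,4}"
proof -
  have "a*a mod 8 = ((a mod 8)*(a mod 8)) mod 8" by (simp add: mod_mult_eq)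
  moreover have "a mod 8 \<in> {0,1,2,3,4,5,6,7}" by auto
  ultimately show ?thesis by auto
qed

lemma m4aux2: "x \<in> {0,1} \<Longrightarrow> y \<in> {0,1} \<Longrightarrow> (x+y) mod 4 \<noteq> (3::int)"
  by auto
lemma m4aux3: "x \<in> {0,1} \<Longrightarrow> y \<in> {0,1} \<Longrightarrow> (x+y) mod 4 = (0::int) \<Longrightarrow> x = 0 \<and> y = 0"
  by auto

lemma halve2:
  assumes "(a::int)*a + b*b = 4*M" 
  obtains a' b' where "a'*a' + b'*b' = M"
proof -
  have "(a*a + b*b) mod 4 = (a*a mod 4 + b*b mod 4) mod 4" by (simp add: mod_add_eq)
  then have "(a*a mod 4 + b*b mod 4) mod 4 = 0" using assms by simp
  moreover have "a*a mod 4 \<in> {0,1}" "b*b mod 4 \<in> {0,1}" using sq_mod4[of a] sq_mod4[of b] by auto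
  ultimately have "a*a mod 4 = 0 \<and> b*b mod 4 = 0" using m4aux3 by metis
  then have "even a" "even b" using sq_mod4_even[of a] sq_mod4_even[of b] by auto
  then obtain a' b' where ab: "a = 2*a'" "b = 2*b'" by (meson evenE)
  have "a*a + b*b = 4*(a'*a' + b'*b')" unfolding ab by (simp add: algebra_simps)
  then have "4*(a'*a' + b'*b') = 4*M" using assms by (rule trans[OF sym])
  then have "a'*a' + b'*b' = M" by simp
  then show ?thesis by (rule that)
qed

lemma halve3:
  assumes "(a::int)*a + b*b + c*c = 4*M" 
  obtains a' b' c' where "a'*a' + b'*b' + c'*c' = M"
proof -
  have "(a*a + b*b + c*c) mod 4 = (a*a mod 4 + b*b mod 4 + c*c mod 4) mod 4" by (rule mod3)
  then have "(a*a mod 4 + b*b mod 4 + c*c mod 4) mod 4 = 0" using assms by simp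
  moreover have "a*a mod 4 \<in> {0,1}" "b*b mod 4 \<in> {0,1}" "c*c mod 4 \<in> {0,1}" using sq_mod4[of a] sq_mod4[of b] sq_mod4[of c] by auto
  ultimately have "a*a mod 4 = 0 \<and> b*b mod 4 = 0 \<and> c*c mod 4 = 0" using m4aux by metis
  then have "even a" "even b" "even c" using sq_mod4_even[of a] sq_mod4_even[of b] sq_mod4_even[of c] by auto
  then obtain a' b' c' where ab: "a = 2*a'" "b = 2*b'" "c = 2*c'" by (meson evenE)
  have "a*a + b*b + c*c = 4*(a'*a' + b'*b' + c'*c')" unfolding ab by (simp add: algebra_simps)
  then have "4*(a'*a' + b'*b' + c'*c') = 4*M" using assms by (rule trans[OF sym])
  then have "a'*a' + b'*b' + c'*c' = M" by simp
  then show ?thesis by (rule that)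
qed

lemma two_sq:
  fixes m :: int
  assumes "m mod 4 = 3"
  shows "a*a + b*b \<noteq> 4^k * m"
proof (induction k arbitrary: a b)
  case 0
  have "(a*a + b*b) mod 4 = (a*a mod 4 + b*b mod 4) mod 4" by (simp add: mod_add_eq)
  moreover have "a*a mod 4 \<in> {0,1}" "b*b mod 4 \<in> {0,1}" using sq_mod4[of a] sq_mod4[of b] by auto
  ultimately have ne: "(a*a + b*b) mod 4 \<noteq> 3" using m4aux2 by metis
  show ?case
  proof
    assume "a*a + b*b = 4^0*m"
    then have "(a*a + b*b) mod 4 = 3" using assms by simp
    with ne show False by simp
  qed
next
  case (Suc k)
  show ?case
  proof
    assume h: "a*a + b*b = 4^Suc k * m"
    then have "a*a + b*b = 4 * (4^k * m)" by simp
    then obtain a' b' where "a'*a' + b'*b' = 4^k*m" by (rule halve2)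
    with Suc.IH show False by blast
  qed
qed

lemma three_sq:
  fixes m :: int
  assumes "m mod 8 = 7"
  shows "a*a + b*b + c*c \<noteq> 4^k * m"
proof (induction k arbitrary: a b c)
  case 0
  have "(a*a + b*b + c*c) mod 8 = (a*a mod 8 + b*b mod 8 + c*c mod 8) mod 8" by (rule mod3)
  moreover have "(a*a mod 8 + b*b mod 8 + c*c mod 8) mod 8 \<noteq> 7"
    using sq_mod8[of a] sq_mod8[of b] sq_mod8[of c] by (rule m8aux)
  ultimately have ne: "(a*a + b*b + c*c) mod 8 \<noteq> 7" by simp
  show ?case
  proof
    assume "a*a + b*b + c*c = 4^0*m"
    then have "(a*a + b*b + c*c) mod 8 = 7" using assms by simp
    with ne show False by simp
  qed
next
  case (Suc k)
  show ?case
  proof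
    assume h: "a*a + b*b + c*c = 4^Suc k * m"
    then have "a*a + b*b + c*c = 4 * (4^k * m)" by simp
    then obtain a' b' c' where "a'*a' + b'*b' + c'*c' = 4^k*m" by (rule halve3)
    with Suc.IH show False by blast
  qed
qed

lemma th_nz: "th n \<noteq> 0 \<Longrightarrow> \<exists>a. a*a = int n"
proof (rule ccontr)
  assume "th n \<noteq> 0" "\<not> (\<exists>a. a*a = int n)"
  then have E: "{j\<in>{-int n..int n}. j*j = int n} = {}" by auto
  have "th n = 0" unfolding th_def E by simp
  then show False using \<open>th n \<noteq> 0\<close> by simp
qed

lemma th_even: "n > 0 \<Longrightarrow> even (th n)"
proof -
  assume n: "n > 0"
  define A where "A = {j\<in>{-int n..int n}. j*j = int n}"
  have fin: "finite A" unfolding A_def by (rule finite_subset[of _ "{-int n..int n}"]) auto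
  have A0: "0 \<notin> A" using n unfolding A_def by simp
  define P where "P = {j\<in>A. j > 0}"
  have AP: "A = P \<union> uminus ` P"
  proof (intro set_eqI iffI)
    fix j assume "j \<in> A"
    then show "j \<in> P \<union> uminus ` P"
    proof (cases "j > 0")
      case False
      with \<open>j \<in> A\<close> A0 have "j < 0" by (cases "j = 0") auto
      moreover have "-j \<in> A" using \<open>j \<in> A\<close> unfolding A_def by auto
      ultimately have "-j \<in> P" unfolding P_def by auto
      then show ?thesis by (auto intro: image_eqI[of j uminus "-j"])
    qed (auto simp: P_def)
  next
    fix j assume "j \<in> P \<union> uminus ` P"
    then show "j \<in> A" unfolding P_def A_def by auto
  qed
  have disj: "P \<inter> uminus ` P = {}" unfolding P_def by auto
  have finP: "finite P" using fin unfolding P_def by simp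
  have "th n = sum sg A" unfolding th_def A_def ..
  also have "\<dots> = sum sg P + sum sg (uminus ` P)"
    unfolding AP using finP disj by (intro sum.union_disjoint) auto
  also have "sum sg (uminus ` P) = sum (sg \<circ> uminus) P"
    by (intro sum.reindex) (simp add: inj_on_def)
  also have "\<dots> = sum sg P" by (simp add: o_def sg_minus)
  finally show ?thesis by simp
qed

lemma Th_nth: "fps_nth Th n = th n" by (simp add: Th_def)
lemma th0: "th 0 = 1"
proof -
  have "{j\<in>{-int 0..int 0}. j*j = int 0} = {0}" by auto
  then show ?thesis unfolding th_def by (simp add: sg_def)
qed

lemma not_sq_th: "\<not> (\<exists>a. a*a = int n) \<Longrightarrow> th n = 0"
  using th_nz by blast

lemma mod8_part:
  assumes N: "\<And>a b. a*a + b*b \<noteq> int N" and Npos: "N > 0"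
  shows "8 dvd int (overpartition_count N)"
proof -
  define Xs where "Xs = Th - 1"
  have ev: "even (fps_nth Xs n)" for n
  proof (cases "n = 0")
    case True then show ?thesis by (simp add: Xs_def Th_nth th0)
  next
    case False then show ?thesis using th_even[of n] by (simp add: Xs_def Th_nth)
  qed
  define Y where "Y = Abs_fps (\<lambda>n. fps_nth Xs n div 2)"
  have XY: "Xs = fps_const 2 * Y"
    by (rule fps_ext) (simp add: Y_def ev)
  have X3: "Xs^3 = fps_const 8 * Y^3"
    unfolding XY by (simp add: power_mult_distrib)
  have G: "Th * Gb = 1" by (rule GAUSS)
  have "Gb = (Th * Gb) * (1 - Xs + Xs^2) - Gb * Xs^3"
    unfolding Xs_def by (simp add: algebra_simps power2_eq_square power3_eq_cube)
  then have "Gb = 1 * (1 - Xs + Xs^2) - Gb * (fps_const 8 * Y^3)" by (simp only: G X3)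
  then have eq: "Gb = (1 - Xs + Xs^2) - fps_const 8 * (Gb * Y^3)" by (simp add: mult.left_commute)
  have x0: "fps_nth Xs 0 = 0" by (simp add: Xs_def Th_nth th0)
  have xsq: "fps_nth Xs i \<noteq> 0 \<Longrightarrow> \<exists>a. a*a = int i" for i
  proof -
    assume h: "fps_nth Xs i \<noteq> 0"
    have "i \<noteq> 0"
    proof
      assume "i = 0" with h x0 show False by simp
    qed
    then have "fps_nth Xs i = th i" by (simp add: Xs_def Th_nth)
    with h show ?thesis using th_nz by auto
  qed
  have XN: "fps_nth Xs N = 0"
  proof (rule ccontr)
    assume "fps_nth Xs N \<noteq> 0"
    then obtain a where "a*a = int N" using xsq by blast
    then have "a*a + 0*0 = int N" by simp
    with N show False by blast
  qed
  have X2N: "fps_nth (Xs^2) N = 0"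
  proof -
    have "fps_nth (Xs^2) N = (\<Sum>i=0..N. fps_nth Xs i * fps_nth Xs (N-i))"
      by (simp add: power2_eq_square fps_mult_nth)
    also have "\<dots> = 0"
    proof (rule sum.neutral, rule ballI)
      fix i assume i: "i \<in> {0..N}"
      show "fps_nth Xs i * fps_nth Xs (N-i) = 0"
      proof (rule ccontr)
        assume "fps_nth Xs i * fps_nth Xs (N-i) \<noteq> 0"
        then have "fps_nth Xs i \<noteq> 0" "fps_nth Xs (N-i) \<noteq> 0" by auto
        then obtain a b where "a*a = int i" "b*b = int (N-i)" using xsq by blast
        then have "a*a + b*b = int N" using i by simp
        with N show False by blast
      qed
    qed
    finally show ?thesis .
  qed
  have "fps_nth Gb N = - (8 * fps_nth (Gb * Y^3) N)"
    using arg_cong[OF eq, of "\<lambda>f. fps_nth f N"] XN X2N Npos by simp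
  then show ?thesis by (simp add: Gb_def)
qed

lemma mod5_part: "5 dvd (int (overpartition_count (5*m)) - fps_nth (Th^3) m)"
proof -
  define U where "U = Abs_fps (\<lambda>m. fps_nth Gb (5*m))"
  have G: "Th * Gb = 1" by (rule GAUSS)
  have key: "fps_nth (Th5 * Gb) (5*k) = fps_nth (Th * U) k" for k
  proof -
    have "fps_nth (Th5 * Gb) (5*k) = (\<Sum>i=0..5*k. fps_nth Th5 i * fps_nth Gb (5*k - i))"
      by (simp add: fps_mult_nth)
    also have "\<dots> = (\<Sum>i=0..5*k. if 5 dvd i then th (i div 5) * fps_nth Gb (5*k - i) else 0)"
      by (intro sum.cong refl) (simp add: Th5_def)
    also have "\<dots> = (\<Sum>i\<in>{i\<in>{0..5*k}. 5 dvd i}. th (i div 5) * fps_nth Gb (5*k - i))"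
      by (rule sum.inter_filter[symmetric]) simp
    also have "{i\<in>{0..5*k}. 5 dvd i} = (\<lambda>j. 5*j) ` {0..k}" by auto
    also have "(\<Sum>i\<in>(\<lambda>j. 5*j) ` {0..k}. th (i div 5) * fps_nth Gb (5*k - i))
        = (\<Sum>j\<in>{0..k}. th j * fps_nth Gb (5*k - 5*j))"
      by (subst sum.reindex) (auto simp: inj_on_def)
    also have "\<dots> = (\<Sum>j=0..k. fps_nth Th j * fps_nth U (k - j))"
      by (intro sum.cong refl) (simp add: U_def Th_nth diff_mult_distrib2)
    also have "\<dots> = fps_nth (Th * U) k" by (simp add: fps_mult_nth)
    finally show ?thesis .
  qed
  have c1: "mc 5 (Th5 * Gb) (Th^5 * Gb)"
    by (intro mc_mult mc_refl mc_sym[OF Th_pow5])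
  have e2: "Th^5 * Gb = Th^4"
    using G by (simp add: power_Suc2[of Th 4, simplified] algebra_simps)
  have "mc 5 (Th * U) (Th^4)"
    unfolding mc_def
  proof
    fix k
    have "5 dvd fps_nth (Th5 * Gb) (5*k) - fps_nth (Th^4) (5*k)"
      using c1 e2 by (simp add: mc_def)
    then have "5 dvd fps_nth (Th * U) k - fps_nth (Th^4) (5*k)" using key by simp
    moreover have "5 dvd fps_nth (Th^4) (5*k) - fps_nth (Th^4) k" by (rule R4')
    ultimately have "5 dvd (fps_nth (Th * U) k - fps_nth (Th^4) (5*k)) + (fps_nth (Th^4) (5*k) - fps_nth (Th^4) k)"
      by (rule dvd_add)
    then show "5 dvd fps_nth (Th * U) k - fps_nth (Th^4) k" by simp
  qed
  then have "mc 5 (Gb * (Th * U)) (Gb * Th^4)" by (intro mc_mult mc_refl)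
  moreover have "Gb * (Th * U) = U" using G by (metis mult.assoc mult.commute mult_1)
  moreover have "Gb * Th^4 = Th^3"
  proof -
    have "Th^4 = Th * Th^3" by (simp add: eval_nat_numeral)
    then have "Gb * Th^4 = (Th * Gb) * Th^3" by (simp add: algebra_simps)
    then show ?thesis using G by simp
  qed
  ultimately have "mc 5 U (Th^3)" by simp
  then show ?thesis by (simp add: mc_def U_def Gb_def)
qed

lemma Th3_zero:
  assumes "\<And>a b c. a*a + b*b + c*c \<noteq> int m"
  shows "fps_nth (Th^3) m = 0"
proof -
  have "fps_nth (Th^3) m = (\<Sum>i=0..m. th i * (\<Sum>j=0..m-i. th j * th (m-i-j)))"
    by (simp add: power3_eq_cube fps_mult_nth Th_nth mult.assoc)
  also have "\<dots> = 0"
  proof (rule sum.neutral, rule ballI)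
    fix i assume i: "i \<in> {0..m}"
    show "th i * (\<Sum>j=0..m-i. th j * th (m-i-j)) = 0"
    proof (cases "th i = 0")
      case False
      then obtain a where a: "a*a = int i" using th_nz by blast
      have "(\<Sum>j=0..m-i. th j * th (m-i-j)) = 0"
      proof (rule sum.neutral, rule ballI)
        fix j assume j: "j \<in> {0..m-i}"
        show "th j * th (m-i-j) = 0"
        proof (rule ccontr)
          assume "th j * th (m-i-j) \<noteq> 0"
          then obtain b c where "b*b = int j" "c*c = int (m-i-j)" using th_nz by (metis mult_zero_left mult_zero_right)
          then have "a*a + b*b + c*c = int m" using a i j by simp
          with assms show False by blast
        qed
      qed
      then show ?thesis by simp
    qed simp
  qed
  finally show ?thesis .
qed

theorem theorem2:
  fixes n \<alpha> :: nat
  shows "overpartition_count (4 ^ \<alpha> * (40 * n + 35)) mod 40 = 0"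
proof -
  define N where "N = 4 ^ \<alpha> * (40 * n + 35)"
  define m where "m = 4 ^ \<alpha> * (8 * n + 7)"
  have Nm: "N = 5 * m" unfolding N_def m_def by simp
  have d8: "8 dvd int (overpartition_count N)"
  proof (rule mod8_part)
    fix a b :: int
    have "int N = 4^\<alpha> * (40 * int n + 35)" unfolding N_def by simp
    moreover have "(40 * int n + 35) mod 4 = 3" by presburger
    ultimately show "a*a + b*b \<noteq> int N" using two_sq[of "40 * int n + 35" a b \<alpha>] by simp
  next
    show "N > 0" unfolding N_def by simp
  qed
  have "fps_nth (Th^3) m = 0"
  proof (rule Th3_zero)
    fix a b c :: int
    have "int m = 4^\<alpha> * (8 * int n + 7)" unfolding m_def by simp
    moreover have "(8 * int n + 7) mod 8 = 7" by presburger
    ultimately show "a*a + b*b + c*c \<noteq> int m" using three_sq[of "8 * int n + 7" a b c \<alpha>] by simp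
  qed
  then have d5: "5 dvd int (overpartition_count N)" using mod5_part[of m] Nm by simp
  have "40 dvd int (overpartition_count N)"
    using d8 d5 by presburger
  then have "40 dvd overpartition_count N" by presburger
  then show ?thesis unfolding N_def by simp
qed


end
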